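(* For every integer $n\ge 1$, as rational functions of $x,x_0,x_1$, $$P_n(x;q^{\frac12}x_0,x_1)=P_n(x;x_0,x_1)+\lambda_n(x_0,x_1)\,P_{n-1}(x;x_0,x_1),$$ where $$\lambda_n(x_0,x_1)=\frac{q^{-\frac12}(1-q^n)^2\left(1-\frac{q^n}{x_1^2}\right)^2}{x_0^2\left(1-\frac{q^{2n-1}}{x_0^2x_1^2}\right)\left(1-\frac{q^{2n}}{x_0^2x_1^2}\right)}.$$
   Context: Let $q$ be a complex parameter with $0<|q|<1$, with a fixed choice of $q^{1/4}$ and $q^{k/4}:=(q^{1/4})^k$; $x,x_0,x_1$ are indeterminates. Notation: $(y)_n=(y;q)_n=\prod_{i=1}^{n}(1-yq^{i-1})$, $(y_1,\dots,y_k)_n=(y_1)_n\cdots(y_k)_n$. For $n\ge 0$ define the (reduced) Askey–Wilson polynomial $$P_n(x;x_0,x_1)=(-1)^nq^{-\frac n2}\frac{\left(q,\frac{q}{x_0^2},\frac{q}{x_1^2}\right)_n}{\left(\frac{q^{n+1}}{x_0^2x_1^2}\right)_n}\sum_{k=0}^{n}q^k\frac{\left(q^{-n},\frac{q^{n+1}}{x_0^2x_1^2}\right)_k}{\left(q,q,\frac{q}{x_0^2},\frac{q}{x_1^2}\right)_k}\,\left(-q^{\frac12}x,-q^{\frac12}x^{-1}\right)_k .$$ This is the Askey–Wilson polynomial $P_n^{(a,b,c,d)}(x)=\frac{(ab,ac,ad)_n}{a^n(abcdq^{n-1})_n}\sum_{k=0}^n\frac{(q^{-n},q^{n-1}abcd,ax,ax^{-1})_k}{(q,ab,ac,ad)_k}q^k$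 with $(a,b,c,d)=(-q^{1/2},-q^{1/2},-q^{1/2}/x_0^2,-q^{1/2}/x_1^2)$; it is a symmetric Laurent polynomial in $x$ of the form $x^n+x^{-n}+$(lower terms). *)

theory Defs
  imports Complex_Main
begin

definition qpoch :: "complex \<Rightarrow> complex \<Rightarrow> nat \<Rightarrow> complex" where
  "qpoch q y n = (\<Prod>i<n. (1 - y * q ^ i))"

text \<open>Reduced Askey-Wilson polynomial P_n(x;x0,x1). The parameter r is the fixed
  choice of q^(1/4); q = r^4, q^(1/2) = r^2, q^(-n/2) = r^(-2n).\<close>
definition AWP :: "complex \<Rightarrow> nat \<Rightarrow> complex \<Rightarrow> complex \<Rightarrow> complex \<Rightarrow> complex" where
  "AWP r n x x0 x1 =
    (let q = r ^ 4 in
      (-1) ^ n * inverse (r ^ (2 * n)) *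
      (qpoch q q n * qpoch q (q / x0\<^sup>2) n * qpoch q (q / x1\<^sup>2) n)
        / qpoch q (q ^ (n + 1) / (x0\<^sup>2 * x1\<^sup>2)) n *
      (\<Sum>k\<le>n. q ^ k *
         (qpoch q (inverse (q ^ n)) k * qpoch q (q ^ (n + 1) / (x0\<^sup>2 * x1\<^sup>2)) k)
         / (qpoch q q k * qpoch q q k * qpoch q (q / x0\<^sup>2) k * qpoch q (q / x1\<^sup>2) k)
         * (qpoch q (- (r ^ 2 * x)) k * qpoch q (- (r ^ 2 / x)) k)))"

definition AWlambda :: "complex \<Rightarrow> nat \<Rightarrow> complex \<Rightarrow> complex \<Rightarrow> complex" where
  "AWlambda r n x0 x1 =
    (let q = r ^ 4 in
      inverse (r ^ 2) * (1 - q ^ n)\<^sup>2 * (1 - q ^ n / x1\<^sup>2)\<^sup>2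
      / (x0\<^sup>2 * (1 - q ^ (2 * n - 1) / (x0\<^sup>2 * x1\<^sup>2)) * (1 - q ^ (2 * n) / (x0\<^sup>2 * x1\<^sup>2))))"

end

theory Submission
  imports Defs
begin

lemma qpoch_Suc: "qpoch q y (Suc m) = qpoch q y m * (1 - y*q^m)"
  unfolding qpoch_def by simp

lemma qpoch_Suc': "qpoch q y (Suc m) = (1 - y) * qpoch q (y*q) m"
  unfolding qpoch_def by (simp add: prod.lessThan_Suc_shift ac_simps del: prod.lessThan_Suc)

lemma qpoch_shift: "(1-y)*qpoch q (y*q) m = qpoch q y m * (1 - y*q^m)"
  using qpoch_Suc[of q y m] qpoch_Suc'[of q y m] by simp

lemma qpoch_factor_nz: "qpoch q y n \<noteq> 0 \<Longrightarrow> i < n \<Longrightarrow> 1 - y*q^i \<noteq> 0"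
  unfolding qpoch_def by auto

lemma qpoch_prefix_nz: "qpoch q y n \<noteq> 0 \<Longrightarrow> k \<le> n \<Longrightarrow> qpoch q y k \<noteq> 0"
  unfolding qpoch_def by auto

lemma qpoch_q_nz: assumes "norm (q::complex) < 1" shows "qpoch q q k \<noteq> 0"
proof -
  have "1 - q*q^i \<noteq> 0" for i
  proof
    assume "1 - q*q^i = 0"
    then have "q^(Suc i) = 1" by simp
    then have "norm (q^Suc i) = 1" by simp
    moreover have "norm q ^ Suc i < 1" using assms
      by (simp only: power_less_one_iff[OF norm_ge_zero]) simp
    moreover have "norm (q^Suc i) = norm q ^ Suc i" by (rule norm_power)
    ultimately show False by simp
  qed
  then show ?thesis unfolding qpoch_def by auto
qed

lemma qpoch_inv_nz: assumes "norm (q::complex) < 1" "q \<noteq> 0" "k \<le> n"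
  shows "qpoch q (inverse (q^n)) k \<noteq> 0"
proof -
  have "1 - inverse (q^n)*q^i \<noteq> 0" if "i < n" for i
  proof
    assume "1 - inverse (q^n)*q^i = 0"
    then have e: "q^i = q^n" using assms(2) by (simp add: field_simps)
    have "q^n = q^i * q^(n-i)" using that by (simp add: power_add[symmetric])
    then have "q^(n-i) = 1" using e assms(2) by simp
    then have "norm (q^(n-i)) = 1" by simp
    moreover have "norm (q^(n-i)) < 1" using assms that
      by (simp add: norm_power power_less_one_iff)
    ultimately show False by simp
  qed
  then show ?thesis unfolding qpoch_def using assms(3) by auto
qed

lemma alg2:
  fixes sg ir h Qn Qm PAn PAm PBn PBm Cn C2m Ik Jk Ck Dk Qk PAk PBk qk A B t s w :: complex
  assumes "Qn = Qm*(1-t)" "PAn = PAm*(1-A*t)" "PBn = PBm*(1-B*t)"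
    "(1-t*A*B)*Cn = C2m*((1-w*A*B)*(1-t^2*A*B))"
    "(1 - 1/t)*Jk = Ik*(1 - s/t)"
    "(1-t*A*B)*Ck = Dk*(1-t*s*A*B)"
    "Cn \<noteq> 0" "C2m \<noteq> 0" "1-t*A*B \<noteq> 0" "1-w*A*B \<noteq> 0" "1-t^2*A*B \<noteq> 0"
    "t \<noteq> 0" "1 - t \<noteq> 0" "h \<noteq> 0" "Qk \<noteq> 0" "PAk \<noteq> 0" "PBk \<noteq> 0"
  shows "(inverse h*(1-t)^2*(1-t*B)^2*A/((1-w*A*B)*(1-t^2*A*B))) *
      (sg * ir * (Qm*PAm*PBm)/C2m * (qk*(Jk*Dk)/(Qk*Qk*PAk*PBk))) * ((1-A*t)*(1-t*s*A*B))
    = (-sg) * (ir*inverse h) * (Qn*PAn*PBn)/Cn * (qk*(Ik*Ck)/(Qk*Qk*PAk*PBk)) * (A*(1-t*B)*(t-s))"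
proof -
  have J: "Jk = Ik*(t-s)/(t-1)" using assms(5,12,13) by (simp add: field_simps)
  have C: "C2m = (1-t*A*B)*Cn/((1-w*A*B)*(1-t^2*A*B))" proof -
    have "(1-w*A*B)*(1-t^2*A*B) \<noteq> 0" using assms(10,11) by simp
    then show ?thesis using assms(4) by (simp add: eq_divide_eq mult.commute)
  qed
  have D: "Dk*(1-t*s*A*B) = (1-t*A*B)*Ck" using assms(6) by simp
  have "(inverse h*(1-t)^2*(1-t*B)^2*A/((1-w*A*B)*(1-t^2*A*B))) *
      (sg * ir * (Qm*PAm*PBm)/C2m * (qk*(Jk*Dk)/(Qk*Qk*PAk*PBk))) * ((1-A*t)*(1-t*s*A*B))
     = (inverse h*(1-t)^2*(1-t*B)^2*A/((1-w*A*B)*(1-t^2*A*B))) *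
      (sg * ir * (Qm*PAm*PBm)/C2m * (qk*(Jk*(Dk*(1-t*s*A*B)))/(Qk*Qk*PAk*PBk))) * (1-A*t)"
    by (simp add: ac_simps)
  also have "\<dots> = (inverse h*(1-t)^2*(1-t*B)^2*A/((1-w*A*B)*(1-t^2*A*B))) *
      (sg * ir * (Qm*PAm*PBm)/((1-t*A*B)*Cn/((1-w*A*B)*(1-t^2*A*B))) * (qk*(Ik*(t-s)/(t-1)*((1-t*A*B)*Ck))/(Qk*Qk*PAk*PBk))) * (1-A*t)"
    unfolding D J C ..
  also have "\<dots> = (-sg) * (ir*inverse h) * (Qn*PAn*PBn)/Cn * (qk*(Ik*Ck)/(Qk*Qk*PAk*PBk)) * (A*(1-t*B)*(t-s))"
    unfolding assms(1-3) using assms(7-17)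
    apply (simp add: divide_simps power2_eq_square)
    apply (simp add: algebra_simps)
    done
  finally show ?thesis .
qed



lemma alg1:
  fixes sg ir Qn PB PBk Qk qk Ik pa pa' pk pk' cn cn' ck ck' A B t s :: complex
  assumes "(1-A)*pa = pa'*(1-A*t)" "(1-A)*pk = pk'*(1-A*s)"
    "(1-t*A*B)*cn = cn'*(1-t^2*A*B)" "(1-t*A*B)*ck = ck'*(1-t*s*A*B)"
    "cn \<noteq> 0" "cn' \<noteq> 0" "pk \<noteq> 0" "pk' \<noteq> 0" "1-A \<noteq> 0" "1-t*A*B \<noteq> 0"
    "1-A*t \<noteq> 0" "1-A*s \<noteq> 0" "1-t^2*A*B \<noteq> 0" "1-t*s*A*B \<noteq> 0"
    "Qk \<noteq> 0" "PBk \<noteq> 0"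
  shows "sg*ir*(Qn*pa'*PB)/cn' * (qk*(Ik*ck')/(Qk*Qk*pk'*PBk)) * ((1-A*t)*(1-t*s*A*B))
       = sg*ir*(Qn*pa*PB)/cn * (qk*(Ik*ck)/(Qk*Qk*pk*PBk)) * ((1-A*s)*(1-t^2*A*B))"
proof -
  have e1: "pa' = (1-A)*pa/(1-A*t)" using assms(1,11) by (simp add: eq_divide_eq)
  have e2: "pk' = (1-A)*pk/(1-A*s)" using assms(2,12) by (simp add: eq_divide_eq)
  have e3: "cn' = (1-t*A*B)*cn/(1-t^2*A*B)" using assms(3,13) by (simp add: eq_divide_eq)
  have e4: "ck' = (1-t*A*B)*ck/(1-t*s*A*B)" using assms(4,14) by (simp add: eq_divide_eq)
  show ?thesis unfolding e1 e2 e3 e4 using assms(5-16)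
    by (simp add: divide_simps power2_eq_square)
qed

definition Gc :: "complex \<Rightarrow> nat \<Rightarrow> nat \<Rightarrow> complex \<Rightarrow> complex \<Rightarrow> complex" where
  "Gc r n k x0 x1 = (let q = r ^ 4 in
      (-1) ^ n * inverse (r ^ (2 * n)) *
      (qpoch q q n * qpoch q (q / x0\<^sup>2) n * qpoch q (q / x1\<^sup>2) n)
        / qpoch q (q ^ (n + 1) / (x0\<^sup>2 * x1\<^sup>2)) n *
      (q ^ k *
         (qpoch q (inverse (q ^ n)) k * qpoch q (q ^ (n + 1) / (x0\<^sup>2 * x1\<^sup>2)) k)
         / (qpoch q q k * qpoch q q k * qpoch q (q / x0\<^sup>2) k * qpoch q (q / x1\<^sup>2) k)))"

lemma AWP_Gc: "AWP r n x x0 x1 = (\<Sum>k\<le>n. Gc r n k x0 x1 *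
   (qpoch (r^4) (- (r ^ 2 * x)) k * qpoch (r^4) (- (r ^ 2 / x)) k))"
  unfolding AWP_def Gc_def Let_def by (simp add: sum_distrib_left mult.assoc)


lemma core1:
  fixes r x0 x1 :: complex and n k :: nat
  assumes r: "r \<noteq> 0" "norm (r ^ 4) < 1"
    and nz: "x0 \<noteq> 0" "x1 \<noteq> 0" and k: "k \<le> n" and n: "n \<ge> 1"
    and d1: "qpoch (r ^ 4) (1 / x0\<^sup>2) n \<noteq> 0"
    and d2: "qpoch (r ^ 4) (r ^ 4 / x0\<^sup>2) n \<noteq> 0"
    and d3: "qpoch (r ^ 4) (r ^ 4 / x1\<^sup>2) n \<noteq> 0"
    and d4: "qpoch (r ^ 4) ((r ^ 4) ^ n / (x0\<^sup>2 * x1\<^sup>2)) n \<noteq> 0"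
    and d5: "qpoch (r ^ 4) ((r ^ 4) ^ (n + 1) / (x0\<^sup>2 * x1\<^sup>2)) n \<noteq> 0"
  shows "Gc r n k (r^2*x0) x1 * ((1 - 1/x0\<^sup>2 * (r^4)^n) * (1 - (r^4)^n * (r^4)^k * (1/x0\<^sup>2) * (1/x1\<^sup>2)))
       = Gc r n k x0 x1 * ((1 - 1/x0\<^sup>2 * (r^4)^k) * (1 - ((r^4)^n)\<^sup>2 * (1/x0\<^sup>2) * (1/x1\<^sup>2)))"
proof -
  define q where "q = r^4"
  define A where "A = 1/x0\<^sup>2"
  define B where "B = 1/x1\<^sup>2"
  define t where "t = q^n"
  define s where "s = q^k"
  have q0: "q \<noteq> 0" using r unfolding q_def by simp
  have a0: "(r^2*x0)\<^sup>2 = r^4*x0\<^sup>2" by (simp add: power_mult_distrib flip: power_mult)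
  have a1: "q/(r^2*x0)\<^sup>2 = A" unfolding A_def a0 q_def using r nz by simp
  have a2: "q/x0\<^sup>2 = A*q" unfolding A_def by simp
  have a3: "q^(n+1)/((r^2*x0)\<^sup>2*x1\<^sup>2) = t*A*B"
    unfolding A_def B_def t_def a0 q_def[symmetric] using q0 nz by (simp add: field_simps)
  have a4: "q^(n+1)/(x0\<^sup>2*x1\<^sup>2) = t*A*B*q"
    unfolding A_def B_def t_def using q0 nz by (simp add: field_simps)
  have a5: "q/x1\<^sup>2 = B*q" unfolding B_def by simp
  have a6: "q^n/(x0\<^sup>2*x1\<^sup>2) = t*A*B"
    unfolding A_def B_def t_def using nz by (simp add: field_simps)
  have d1': "qpoch q A n \<noteq> 0" using d1 unfolding A_def q_def .
  have d2': "qpoch q (A*q) n \<noteq> 0" using d2 unfolding q_def[symmetric] a2 .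
  have d3': "qpoch q (B*q) n \<noteq> 0" using d3 unfolding q_def[symmetric] a5 .
  have d4': "qpoch q (t*A*B) n \<noteq> 0" using d4 unfolding q_def[symmetric] a6 .
  have d5': "qpoch q (t*A*B*q) n \<noteq> 0" using d5 unfolding q_def[symmetric] a4 .
  have n0: "0 < n" using n by simp
  have R1: "(1-A)*qpoch q (A*q) n = qpoch q A n*(1-A*t)" using qpoch_shift[of A q n] unfolding t_def .
  have R2: "(1-A)*qpoch q (A*q) k = qpoch q A k*(1-A*s)" using qpoch_shift[of A q k] unfolding s_def .
  have R3: "(1-t*A*B)*qpoch q (t*A*B*q) n = qpoch q (t*A*B) n*(1-t^2*A*B)"
    using qpoch_shift[of "t*A*B" q n] unfolding t_def by (simp add: power2_eq_square ac_simps)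
  have R4: "(1-t*A*B)*qpoch q (t*A*B*q) k = qpoch q (t*A*B) k*(1-t*s*A*B)"
    using qpoch_shift[of "t*A*B" q k] unfolding s_def by (simp add: ac_simps)
  have N1: "1-A \<noteq> 0" using qpoch_factor_nz[OF d1' n0] by simp
  have N2: "1-t*A*B \<noteq> 0" using qpoch_factor_nz[OF d4' n0] by simp
  have tq: "t = q*q^(n-1)" unfolding t_def using n0 by (cases n) simp_all
  have N3: "1-A*t \<noteq> 0"
  proof -
    have e: "A*q*q^(n-1) = A*t" unfolding tq by (simp add: mult.assoc)
    have f: "1 - A*q*q^(n-1) \<noteq> 0" by (rule qpoch_factor_nz[OF d2']) (use n0 in simp)
    show ?thesis using f unfolding e .
  qed
  have N4: "1-A*s \<noteq> 0"
  proof (cases k)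
    case 0 then show ?thesis using N1 unfolding s_def by simp
  next
    case (Suc j) then show ?thesis
      using qpoch_factor_nz[OF d2', of j] k unfolding s_def by (simp add: ac_simps)
  qed
  have N5: "1-t^2*A*B \<noteq> 0"
  proof -
    have e: "t*A*B*q*q^(n-1) = t^2*A*B" unfolding power2_eq_square
      by (subst (2) tq) (simp add: ac_simps)
    have f: "1 - t*A*B*q*q^(n-1) \<noteq> 0" by (rule qpoch_factor_nz[OF d5']) (use n0 in simp)
    show ?thesis using f unfolding e .
  qed
  have N6: "1-t*s*A*B \<noteq> 0"
  proof (cases k)
    case 0 then show ?thesis using N2 unfolding s_def by simp
  next
    case (Suc j) then show ?thesis
      using qpoch_factor_nz[OF d5', of j] k unfolding s_def by (simp add: ac_simps)
  qed
  have P1: "qpoch q (A*q) k \<noteq> 0" using qpoch_prefix_nz[OF d2' k] .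
  have P2: "qpoch q A k \<noteq> 0" using qpoch_prefix_nz[OF d1' k] .
  have P3: "qpoch q q k \<noteq> 0" using qpoch_q_nz r(2) unfolding q_def by blast
  have P4: "qpoch q (B*q) k \<noteq> 0" using qpoch_prefix_nz[OF d3' k] .
  show ?thesis
    unfolding Gc_def Let_def q_def[symmetric]
    unfolding a1 a2 a3 a4 a5
    unfolding A_def[symmetric] B_def[symmetric] t_def[symmetric] s_def[symmetric]
    by (rule alg1[OF R1 R2 R3 R4 d5' d4' P1 P2 N1 N2 N3 N4 N5 N6 P3 P4])
qed


lemma core2:
  fixes r x0 x1 :: complex and n m k :: nat
  assumes r: "r \<noteq> 0" "norm (r ^ 4) < 1"
    and nz: "x0 \<noteq> 0" "x1 \<noteq> 0" and k: "k \<le> m" and nm: "n = Suc m"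
    and d1: "qpoch (r ^ 4) (1 / x0\<^sup>2) n \<noteq> 0"
    and d2: "qpoch (r ^ 4) (r ^ 4 / x0\<^sup>2) n \<noteq> 0"
    and d3: "qpoch (r ^ 4) (r ^ 4 / x1\<^sup>2) n \<noteq> 0"
    and d4: "qpoch (r ^ 4) ((r ^ 4) ^ n / (x0\<^sup>2 * x1\<^sup>2)) n \<noteq> 0"
    and d5: "qpoch (r ^ 4) ((r ^ 4) ^ (n + 1) / (x0\<^sup>2 * x1\<^sup>2)) n \<noteq> 0"
  shows "AWlambda r n x0 x1 * Gc r m k x0 x1 * ((1 - 1/x0\<^sup>2 * (r^4)^n) * (1 - (r^4)^n * (r^4)^k * (1/x0\<^sup>2) * (1/x1\<^sup>2)))
       = Gc r n k x0 x1 * (1/x0\<^sup>2 * (1 - (r^4)^n * (1/x1\<^sup>2)) * ((r^4)^n - (r^4)^k))"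
proof -
  define q where "q = r^4"
  define A where "A = 1/x0\<^sup>2"
  define B where "B = 1/x1\<^sup>2"
  define t where "t = q^n"
  define s where "s = q^k"
  define w where "w = t*q^m"
  have q0: "q \<noteq> 0" using r unfolding q_def by simp
  have tq: "t = q*q^m" unfolding t_def nm by simp
  have t0: "t \<noteq> 0" unfolding t_def using q0 by simp
  have a2: "q/x0\<^sup>2 = A*q" unfolding A_def by simp
  have a4: "q^(n+1)/(x0\<^sup>2*x1\<^sup>2) = t*A*B*q"
    unfolding A_def B_def t_def using q0 nz by (simp add: field_simps)
  have a5: "q/x1\<^sup>2 = B*q" unfolding B_def by simp
  have a6: "q^n/(x0\<^sup>2*x1\<^sup>2) = t*A*B"
    unfolding A_def B_def t_def using nz by (simp add: field_simps)
  have a7: "q^(m+1)/(x0\<^sup>2*x1\<^sup>2) = t*A*B"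
    unfolding A_def B_def t_def nm using nz by (simp add: field_simps)
  have a8: "inverse (q^m) = inverse t * q" unfolding tq using q0 by (simp add: field_simps)
  have d1': "qpoch q A n \<noteq> 0" using d1 unfolding A_def q_def .
  have d2': "qpoch q (A*q) n \<noteq> 0" using d2 unfolding q_def[symmetric] a2 .
  have d3': "qpoch q (B*q) n \<noteq> 0" using d3 unfolding q_def[symmetric] a5 .
  have d4': "qpoch q (t*A*B) n \<noteq> 0" using d4 unfolding q_def[symmetric] a6 .
  have d5': "qpoch q (t*A*B*q) n \<noteq> 0" using d5 unfolding q_def[symmetric] a4 .
  have kn: "k \<le> n" using k nm by simp
  have mn: "m \<le> n" using nm by simp
  have L: "AWlambda r n x0 x1 = inverse (r^2)*(1-t)\<^sup>2*(1-t*B)\<^sup>2*A/((1-w*A*B)*(1-t\<^sup>2*A*B))"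
  proof -
    have l1: "q^(2*n-1)/(x0\<^sup>2*x1\<^sup>2) = w*A*B"
    proof -
      have "q^(2*n-1) = w" unfolding w_def tq nm by (simp add: power_add[symmetric] mult_2)
      then show ?thesis unfolding A_def B_def using nz by (simp add: field_simps)
    qed
    have l2: "q^(2*n)/(x0\<^sup>2*x1\<^sup>2) = t\<^sup>2*A*B"
      unfolding A_def B_def t_def using nz by (simp add: field_simps power_mult power2_eq_square)
    have l3: "q^n/x1\<^sup>2 = t*B" unfolding t_def B_def by simp
    have l4: "x0\<^sup>2 = 1/A" unfolding A_def by simp
    show ?thesis unfolding AWlambda_def Let_def q_def[symmetric] l1 l2 l3 unfolding l4 t_def[symmetric]
      by (simp add: field_simps)
  qed
  have sg: "(-1)^n = - ((-1)^m :: complex)" unfolding nm by simp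
  have ir: "inverse (r^(2*n)) = inverse (r^(2*m)) * inverse (r^2)" unfolding nm
    by (simp add: power_add[symmetric] mult_2_right flip: inverse_mult_distrib)
  have R1: "qpoch q q n = qpoch q q m * (1-t)" unfolding nm qpoch_Suc tq ..
  have R2: "qpoch q (A*q) n = qpoch q (A*q) m * (1-A*t)" unfolding nm qpoch_Suc tq
    by (simp add: mult.assoc)
  have R3: "qpoch q (B*q) n = qpoch q (B*q) m * (1-B*t)" unfolding nm qpoch_Suc tq
    by (simp add: mult.assoc)
  have R4: "(1-t*A*B)*qpoch q (t*A*B*q) n = qpoch q (t*A*B) m*((1-w*A*B)*(1-t\<^sup>2*A*B))"
  proof -
    have "(1-t*A*B)*qpoch q (t*A*B*q) n = qpoch q (t*A*B) (Suc n)" by (rule qpoch_Suc'[symmetric])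
    also have "\<dots> = qpoch q (t*A*B) m * (1 - t*A*B*q^m) * (1 - t*A*B*q^Suc m)"
      unfolding nm qpoch_Suc ..
    also have "\<dots> = qpoch q (t*A*B) m*((1-w*A*B)*(1-t\<^sup>2*A*B))"
      unfolding w_def power2_eq_square by (subst (3) tq) (simp add: ac_simps)
    finally show ?thesis .
  qed
  have R5: "(1 - 1/t)*qpoch q (inverse t * q) k = qpoch q (inverse t) k*(1 - s/t)"
    using qpoch_shift[of "inverse t" q k] unfolding a8 s_def by (simp add: field_simps)
  have R6: "(1-t*A*B)*qpoch q (t*A*B*q) k = qpoch q (t*A*B) k*(1-t*s*A*B)"
    using qpoch_shift[of "t*A*B" q k] unfolding s_def by (simp add: ac_simps)
  have n0: "0 < n" using nm by simp
  have N2: "1-t*A*B \<noteq> 0" using qpoch_factor_nz[OF d4' n0] by simp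
  have N3: "1-w*A*B \<noteq> 0"
  proof -
    have e: "t*A*B*q^m = w*A*B" unfolding w_def by (simp add: ac_simps)
    have f: "1 - t*A*B*q^m \<noteq> 0" by (rule qpoch_factor_nz[OF d4']) (use nm in simp)
    show ?thesis using f unfolding e .
  qed
  have N5: "1-t\<^sup>2*A*B \<noteq> 0"
  proof -
    have e: "t*A*B*q*q^m = t\<^sup>2*A*B" unfolding power2_eq_square
      by (subst (2) tq) (simp add: ac_simps)
    have f: "1 - t*A*B*q*q^m \<noteq> 0" by (rule qpoch_factor_nz[OF d5']) (use nm in simp)
    show ?thesis using f unfolding e .
  qed
  have N6: "1 - t \<noteq> 0"
  proof -
    have f: "1 - q*q^m \<noteq> 0" by (rule qpoch_factor_nz[OF qpoch_q_nz[of q n]]) (use r nm q_def in simp_all)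
    show ?thesis using f unfolding tq .
  qed
  have h0: "r^2 \<noteq> 0" using r by simp
  have C2: "qpoch q (t*A*B) m \<noteq> 0" using qpoch_prefix_nz[OF d4' mn] .
  have P1: "qpoch q (A*q) k \<noteq> 0" using qpoch_prefix_nz[OF d2' kn] .
  have P3: "qpoch q q k \<noteq> 0" using qpoch_q_nz r(2) unfolding q_def by blast
  have P4: "qpoch q (B*q) k \<noteq> 0" using qpoch_prefix_nz[OF d3' kn] .
  show ?thesis
    unfolding L
    unfolding Gc_def Let_def q_def[symmetric] sg ir
    unfolding a2 a4 a5 a7 a8
    unfolding A_def[symmetric] B_def[symmetric] t_def[symmetric] s_def[symmetric]
    by (rule alg2[OF R1 R2 R3 R4 R5 R6 d5' C2 N2 N3 N5 t0 N6 h0 P3 P1 P4])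
qed


lemma Dnz:
  fixes r x0 x1 :: complex and n k :: nat
  assumes r: "r \<noteq> 0" and nz: "x0 \<noteq> 0" "x1 \<noteq> 0" and k: "k \<le> n" and n: "n \<ge> 1"
    and d2: "qpoch (r ^ 4) (r ^ 4 / x0\<^sup>2) n \<noteq> 0"
    and d4: "qpoch (r ^ 4) ((r ^ 4) ^ n / (x0\<^sup>2 * x1\<^sup>2)) n \<noteq> 0"
    and d5: "qpoch (r ^ 4) ((r ^ 4) ^ (n + 1) / (x0\<^sup>2 * x1\<^sup>2)) n \<noteq> 0"
  shows "(1 - 1/x0\<^sup>2 * (r^4)^n) * (1 - (r^4)^n * (r^4)^k * (1/x0\<^sup>2) * (1/x1\<^sup>2)) \<noteq> 0"
proof -
  define q where "q = r^4"
  define A where "A = 1/x0\<^sup>2"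
  define B where "B = 1/x1\<^sup>2"
  define t where "t = q^n"
  define s where "s = q^k"
  have q0: "q \<noteq> 0" using r unfolding q_def by simp
  have a2: "q/x0\<^sup>2 = A*q" unfolding A_def by simp
  have a4: "q^(n+1)/(x0\<^sup>2*x1\<^sup>2) = t*A*B*q"
    unfolding A_def B_def t_def using q0 nz by (simp add: field_simps)
  have a6: "q^n/(x0\<^sup>2*x1\<^sup>2) = t*A*B"
    unfolding A_def B_def t_def using nz by (simp add: field_simps)
  have d2': "qpoch q (A*q) n \<noteq> 0" using d2 unfolding q_def[symmetric] a2 .
  have d4': "qpoch q (t*A*B) n \<noteq> 0" using d4 unfolding q_def[symmetric] a6 .
  have d5': "qpoch q (t*A*B*q) n \<noteq> 0" using d5 unfolding q_def[symmetric] a4 .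
  have n0: "0 < n" using n by simp
  have tq: "t = q*q^(n-1)" unfolding t_def using n0 by (cases n) simp_all
  have N2: "1-t*A*B \<noteq> 0" using qpoch_factor_nz[OF d4' n0] by simp
  have N3: "1-A*t \<noteq> 0"
  proof -
    have e: "A*q*q^(n-1) = A*t" unfolding tq by (simp add: mult.assoc)
    have f: "1 - A*q*q^(n-1) \<noteq> 0" by (rule qpoch_factor_nz[OF d2']) (use n0 in simp)
    show ?thesis using f unfolding e .
  qed
  have N6: "1-t*s*A*B \<noteq> 0"
  proof (cases k)
    case 0 then show ?thesis using N2 unfolding s_def by simp
  next
    case (Suc j) then show ?thesis
      using qpoch_factor_nz[OF d5', of j] k unfolding s_def by (simp add: ac_simps)
  qed
  have "(1 - A*t) * (1 - t*s*A*B) \<noteq> 0" using N3 N6 by simp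
  then show ?thesis unfolding A_def B_def t_def s_def q_def by (simp add: ac_simps)
qed

lemma comb: "G' * D = G * E1 \<Longrightarrow> LG * D = G * E2 \<Longrightarrow> E1 = D + E2 \<Longrightarrow> G' * D = (G + LG) * D"
  for G' D G E1 LG E2 :: complex
  by (simp add: algebra_simps)

lemma ident: "(1 - a*s)*(1 - t\<^sup>2*a*b) = (1 - a*t)*(1 - t*s*a*b) + a*(1 - t*b)*(t - s)"
  for a b s t :: complex
  by (simp add: algebra_simps power2_eq_square)

theorem mainTheorem1:
  fixes r x x0 x1 :: complex and n :: nat
  assumes r: "r \<noteq> 0" "norm (r ^ 4) < 1"
    and n: "n \<ge> 1"
    and nz: "x \<noteq> 0" "x0 \<noteq> 0" "x1 \<noteq> 0"
    and d1: "qpoch (r ^ 4) (1 / x0\<^sup>2) n \<noteq> 0"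
    and d2: "qpoch (r ^ 4) (r ^ 4 / x0\<^sup>2) n \<noteq> 0"
    and d3: "qpoch (r ^ 4) (r ^ 4 / x1\<^sup>2) n \<noteq> 0"
    and d4: "qpoch (r ^ 4) ((r ^ 4) ^ n / (x0\<^sup>2 * x1\<^sup>2)) n \<noteq> 0"
    and d5: "qpoch (r ^ 4) ((r ^ 4) ^ (n + 1) / (x0\<^sup>2 * x1\<^sup>2)) n \<noteq> 0"
  shows "AWP r n x (r ^ 2 * x0) x1
           = AWP r n x x0 x1 + AWlambda r n x0 x1 * AWP r (n - 1) x x0 x1"
  proof -
  obtain m where nm: "n = Suc m" using n by (cases n) auto
  define \<phi> where "\<phi> k = qpoch (r^4) (- (r ^ 2 * x)) k * qpoch (r^4) (- (r ^ 2 / x)) k" for k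
  define L where "L = AWlambda r n x0 x1"
  have key: "Gc r n k (r^2*x0) x1 = Gc r n k x0 x1 + L * (if k \<le> m then Gc r m k x0 x1 else 0)"
    if k: "k \<le> n" for k
  proof -
    define D where "D = (1 - 1/x0\<^sup>2 * (r^4)^n) * (1 - (r^4)^n * (r^4)^k * (1/x0\<^sup>2) * (1/x1\<^sup>2))"
    have D0: "D \<noteq> 0" unfolding D_def by (rule Dnz[OF r(1) nz(2,3) k n d2 d4 d5])
    have c1: "Gc r n k (r^2*x0) x1 * D = Gc r n k x0 x1 * ((1 - 1/x0\<^sup>2 * (r^4)^k) * (1 - ((r^4)^n)\<^sup>2 * (1/x0\<^sup>2) * (1/x1\<^sup>2)))"
      unfolding D_def by (rule core1[OF r nz(2,3) k n d1 d2 d3 d4 d5])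
    show ?thesis
    proof (cases "k \<le> m")
      case True
      have c2: "L * Gc r m k x0 x1 * D = Gc r n k x0 x1 * (1/x0\<^sup>2 * (1 - (r^4)^n * (1/x1\<^sup>2)) * ((r^4)^n - (r^4)^k))"
        unfolding L_def D_def by (rule core2[OF r nz(2,3) True nm d1 d2 d3 d4 d5])
      have "Gc r n k (r^2*x0) x1 * D = (Gc r n k x0 x1 + L * Gc r m k x0 x1) * D"
        by (rule comb[OF c1 c2]) (unfold D_def, rule ident)
      then show ?thesis using D0 True by simp
    next
      case False
      then have kn: "k = n" using k nm by simp
      have "Gc r n k (r^2*x0) x1 * D = Gc r n k x0 x1 * D"
        using c1 unfolding D_def kn by (simp add: power2_eq_square ac_simps)
      then show ?thesis using D0 False by simp
    qed
  qed
  have "AWP r n x (r ^ 2 * x0) x1 = (\<Sum>k\<le>n. Gc r n k (r^2*x0) x1 * \<phi> k)"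
    unfolding AWP_Gc \<phi>_def ..
  also have "\<dots> = (\<Sum>k\<le>n. Gc r n k x0 x1 * \<phi> k) + L * (\<Sum>k\<le>n. (if k \<le> m then Gc r m k x0 x1 else 0) * \<phi> k)"
  proof -
    have "(\<Sum>k\<le>n. Gc r n k (r^2*x0) x1 * \<phi> k) = (\<Sum>k\<le>n. Gc r n k x0 x1 * \<phi> k + L * ((if k \<le> m then Gc r m k x0 x1 else 0) * \<phi> k))"
      by (rule sum.cong) (simp_all add: key distrib_right mult.assoc)
    then show ?thesis by (simp add: sum.distrib sum_distrib_left)
  qed
  also have "(\<Sum>k\<le>n. (if k \<le> m then Gc r m k x0 x1 else 0) * \<phi> k) = (\<Sum>k\<le>m. Gc r m k x0 x1 * \<phi> k)"
    unfolding nm by simp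
  finally have fin: "AWP r n x (r ^ 2 * x0) x1 = (\<Sum>k\<le>n. Gc r n k x0 x1 * \<phi> k) + L * (\<Sum>k\<le>m. Gc r m k x0 x1 * \<phi> k)" .
  have h1: "AWP r n x x0 x1 = (\<Sum>k\<le>n. Gc r n k x0 x1 * \<phi> k)" unfolding AWP_Gc \<phi>_def ..
  have h2: "AWP r (n-1) x x0 x1 = (\<Sum>k\<le>m. Gc r m k x0 x1 * \<phi> k)" unfolding AWP_Gc \<phi>_def nm by simp
  show ?thesis unfolding fin h1 h2 L_def ..
qed

end
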